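(* Let $X$ be a rearrangement invariant space on $\mathbb N$ with the Fatou property. Then for every $f\in X$, $$\operatorname{dist}_X(f^*,X_a)=\operatorname{dist}_X(f,X_a).$$
   Context: A rearrangement invariant space on $\mathbb N$ (counting measure) is a Banach space $X$ of real sequences such that $|x|\le|y|$ coordinatewise, $y\in X$ imply $x\in X$, $\|x\|_X\le\|y\|_X$, containing a sequence with all coordinates nonzero, and such that whenever $x\in X$ and $y$ has the same distribution function as $x$ ($d_x(\lambda)=\#\{n:|x_n|>\lambda\}$), then $y\in X$ and $\|y\|_X=\|x\|_X$. Fatou property: if $0\le x^{(n)}\uparrow x$ coordinatewise, $x^{(n)}\in X$, $\sup_n\|x^{(n)}\|_X<\infty$, then $x\in X$ and $\|x^{(n)}\|_X\uparrow\|x\|_X$. The non-increasing rearrangement is $f^*=(f^*_n)$ with $f^*_n=\inf\{\lambda>0:d_f(\lambda)<n\}$. $X_a$ is the ideal of order continuous elements: $x\in X_a$ iff for every sequence $0\le x^{(n)}\le|x|$ with $x^{(n)}\downarrow0$ coordinatewise one has $\|x^{(n)}\|_X\to0$. $\operatorname{dist}_X(h,X_a)=\inf\{\|h-g\|_X:g\in X_a\}$. *)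

theory Defs
  imports "HOL-Analysis.Analysis" "HOL-Library.Extended_Nat"
begin

type_synonym seq = "nat \<Rightarrow> real"

definition distf :: "seq \<Rightarrow> real \<Rightarrow> enat" where
  "distf x t = (if finite {n. \<bar>x n\<bar> > t} then enat (card {n. \<bar>x n\<bar> > t}) else \<infinity>)"

definition equidist :: "seq \<Rightarrow> seq \<Rightarrow> bool" where
  "equidist x y \<longleftrightarrow> (\<forall>t. distf x t = distf y t)"

text \<open>Non-increasing rearrangement; index shifted by one: decrearr f k = f^*_(k+1).\<close>
definition decrearr :: "seq \<Rightarrow> seq" where
  "decrearr f k = Inf {t::real. t > 0 \<and> distf f t < enat (Suc k)}"

definition banach_seq_space :: "seq set \<Rightarrow> (seq \<Rightarrow> real) \<Rightarrow> bool" where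
  "banach_seq_space S N \<longleftrightarrow>
     (\<lambda>n. 0) \<in> S \<and> (\<forall>x\<in>S. \<forall>y\<in>S. (\<lambda>n. x n + y n) \<in> S) \<and> (\<forall>c::real. \<forall>x\<in>S. (\<lambda>n. c * x n) \<in> S) \<and>
     (\<forall>x\<in>S. N x \<ge> 0) \<and> (\<forall>x\<in>S. N x = 0 \<longleftrightarrow> x = (\<lambda>n. 0)) \<and>
     (\<forall>c. \<forall>x\<in>S. N (\<lambda>n. c * x n) = \<bar>c\<bar> * N x) \<and>
     (\<forall>x\<in>S. \<forall>y\<in>S. N (\<lambda>n. x n + y n) \<le> N x + N y) \<and>
     (\<forall>xs. (\<forall>k. xs k \<in> S) \<and> (\<forall>e>0. \<exists>M. \<forall>m\<ge>M. \<forall>n\<ge>M. N (\<lambda>i. xs m i - xs n i) < e)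
        \<longrightarrow> (\<exists>x\<in>S. (\<lambda>k. N (\<lambda>i. xs k i - x i)) \<longlonglongrightarrow> 0))"

definition ri_space :: "seq set \<Rightarrow> (seq \<Rightarrow> real) \<Rightarrow> bool" where
  "ri_space S N \<longleftrightarrow> banach_seq_space S N \<and>
     (\<forall>x y. y \<in> S \<and> (\<forall>n. \<bar>x n\<bar> \<le> \<bar>y n\<bar>) \<longrightarrow> x \<in> S \<and> N x \<le> N y) \<and>
     (\<exists>x\<in>S. \<forall>n. x n \<noteq> 0) \<and>
     (\<forall>x y. x \<in> S \<and> equidist x y \<longrightarrow> y \<in> S \<and> N y = N x)"

definition fatou :: "seq set \<Rightarrow> (seq \<Rightarrow> real) \<Rightarrow> bool" where
  "fatou S N \<longleftrightarrow>
     (\<forall>(xs :: nat \<Rightarrow> seq) x. (\<forall>k. xs k \<in> S) \<and> (\<forall>k n. 0 \<le> xs k n) \<and>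
        (\<forall>n. incseq (\<lambda>k. xs k n)) \<and> (\<forall>n. (\<lambda>k. xs k n) \<longlonglongrightarrow> x n) \<and>
        bdd_above (range (\<lambda>k. N (xs k)))
      \<longrightarrow> x \<in> S \<and> incseq (\<lambda>k. N (xs k)) \<and> (\<lambda>k. N (xs k)) \<longlonglongrightarrow> N x)"

definition ord_cont_part :: "seq set \<Rightarrow> (seq \<Rightarrow> real) \<Rightarrow> seq set" where
  "ord_cont_part S N = {x \<in> S. \<forall>(xs :: nat \<Rightarrow> seq).
      (\<forall>k n. 0 \<le> xs k n \<and> xs k n \<le> \<bar>x n\<bar>) \<and> (\<forall>n. decseq (\<lambda>k. xs k n)) \<and>
      (\<forall>n. (\<lambda>k. xs k n) \<longlonglongrightarrow> 0) \<longrightarrow> (\<lambda>k. N (xs k)) \<longlonglongrightarrow> 0}"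

definition dist_Xa :: "seq set \<Rightarrow> (seq \<Rightarrow> real) \<Rightarrow> seq \<Rightarrow> real" where
  "dist_Xa S N h = (INF g\<in>ord_cont_part S N. N (\<lambda>i. h i - g i))"

end

theory Submission
  imports Defs
begin

definition tlz :: "nat \<Rightarrow> seq \<Rightarrow> seq" where
  "tlz m x = (\<lambda>n. if n < m then 0 else x n)"

lemma distf_fin: "finite {n. t < \<bar>x n\<bar>} \<Longrightarrow> distf x t = enat (card {n. t < \<bar>x n\<bar>})"
  unfolding distf_def by simp

lemma distf_inf: "infinite {n. t < \<bar>x n\<bar>} \<Longrightarrow> distf x t = \<infinity>"
  unfolding distf_def by simp

lemma distf_mono: "s \<le> t \<Longrightarrow> distf x t \<le> distf x s"
proof -
  assume st: "s \<le> t"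
  have sub: "{n. t < \<bar>x n\<bar>} \<subseteq> {n. s < \<bar>x n\<bar>}" using st by auto
  show ?thesis
  proof (cases "finite {n. s < \<bar>x n\<bar>}")
    case True
    then have "finite {n. t < \<bar>x n\<bar>}" using sub finite_subset by blast
    then show ?thesis using True sub by (simp add: distf_fin card_mono)
  next
    case False
    then show ?thesis by (simp add: distf_inf)
  qed
qed

lemma r_basic:
  assumes bnd: "\<And>n. \<bar>f n\<bar> \<le> B"
  shows "0 \<le> decrearr f k \<and> (\<forall>t. 0 \<le> t \<longrightarrow> (t < decrearr f k \<longleftrightarrow> enat k < distf f t))"
proof -
  define A where "A = {t::real. t > 0 \<and> distf f t < enat (Suc k)}"
  have dA: "decrearr f k = Inf A" unfolding A_def decrearr_def by simp
  have B0: "0 \<le> B" using bnd[of 0] by linarith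
  have "{n. B + 1 < \<bar>f n\<bar>} = {}" 
  proof -
    have "\<not> B + 1 < \<bar>f n\<bar>" for n using bnd[of n] by linarith
    then show ?thesis by auto
  qed
  then have "B + 1 \<in> A" using B0 unfolding A_def by (simp add: distf_fin zero_enat_def)
  then have Ane: "A \<noteq> {}" by auto
  have Abdd: "bdd_below A" unfolding A_def by (rule bdd_belowI[of _ 0]) auto
  have nn: "0 \<le> decrearr f k" unfolding dA using Ane by (rule cInf_greatest) (auto simp: A_def)
  have ch: "t < decrearr f k \<longleftrightarrow> enat k < distf f t" if t0: "0 \<le> t" for t
  proof
    assume lt: "t < decrearr f k"
    show "enat k < distf f t"
    proof (rule ccontr)
      assume "\<not> enat k < distf f t"
      then have dk: "distf f t \<le> enat k" by simp
      have "decrearr f k \<le> t"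
      proof (rule dense_ge)
        fix s assume ts: "t < s"
        have "distf f s \<le> distf f t" using ts by (simp add: distf_mono)
        then have "distf f s < enat (Suc k)" using dk
        proof -
          have "enat k < enat (Suc k)" by simp
          then show ?thesis using \<open>distf f s \<le> distf f t\<close> dk by (meson order.trans order_le_less_trans)
        qed
        then have "s \<in> A" using ts t0 unfolding A_def by auto
        then show "decrearr f k \<le> s" unfolding dA using Abdd by (rule cInf_lower)
      qed
      then show False using lt by simp
    qed
  next
    assume kl: "enat k < distf f t"
    define P where "P = {n. t < \<bar>f n\<bar>}"
    obtain F where F: "F \<subseteq> P" "finite F" "card F = Suc k"
    proof (cases "finite P")
      case True
      then have "distf f t = enat (card P)" unfolding P_def by (simp add: distf_fin)
      then have "Suc k \<le> card P" using kl by simp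
      then show ?thesis using that obtain_subset_with_card_n by metis
    next
      case False
      then show ?thesis using that infinite_arbitrarily_large by metis
    qed
    define \<delta> where "\<delta> = Min ((\<lambda>n. \<bar>f n\<bar>) ` F)"
    have Fne: "F \<noteq> {}" using F by auto
    have "\<delta> \<in> (\<lambda>n. \<bar>f n\<bar>) ` F"
      using Min_in[of "(\<lambda>n. \<bar>f n\<bar>) ` F"] F Fne unfolding \<delta>_def by auto
    then obtain n0 where n0: "n0 \<in> F" "\<delta> = \<bar>f n0\<bar>" by auto
    have td: "t < \<delta>" using n0 F unfolding P_def by auto
    have dle: "\<delta> \<le> \<bar>f n\<bar>" if "n \<in> F" for n
      unfolding \<delta>_def using F that by auto
    have "\<delta> \<le> s" if sA: "s \<in> A" for s
    proof (rule ccontr)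
      assume "\<not> \<delta> \<le> s"
      then have sd: "s < \<delta>" by simp
      have FQ: "F \<subseteq> {n. s < \<bar>f n\<bar>}" using dle sd by fastforce
      have "enat (Suc k) \<le> distf f s"
      proof (cases "finite {n. s < \<bar>f n\<bar>}")
        case True
        then have "card F \<le> card {n. s < \<bar>f n\<bar>}" using FQ by (rule card_mono)
        then show ?thesis using True F by (simp add: distf_fin)
      next
        case False
        then show ?thesis by (simp add: distf_inf)
      qed
      then show False using sA unfolding A_def by (simp add: not_le[symmetric])
    qed
    then have "\<delta> \<le> decrearr f k" unfolding dA using Ane by (intro cInf_greatest) auto
    then show "t < decrearr f k" using td by simp
  qed
  show ?thesis using nn ch by simp
qed

lemma r_nonneg:
  fixes f :: seq and B :: real and k :: nat
  assumes bnd: "\<And>n. \<bar>f n\<bar> \<le> B"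
  shows "0 \<le> decrearr f k"
  using r_basic[of f B k, OF bnd] by (rule conjunct1)

lemma r_char:
  fixes f :: seq and B :: real and t :: real and k :: nat
  assumes bnd: "\<And>n. \<bar>f n\<bar> \<le> B" and t0: "0 \<le> t"
  shows "t < decrearr f k \<longleftrightarrow> enat k < distf f t"
proof -
  have "\<forall>t. 0 \<le> t \<longrightarrow> (t < decrearr f k \<longleftrightarrow> enat k < distf f t)"
    using r_basic[of f B k, OF bnd] by (rule conjunct2)
  then show ?thesis using t0 by simp
qed

lemma r_distf:
  assumes bnd: "\<And>n. \<bar>f n\<bar> \<le> B"
  shows "distf (decrearr f) t = distf f t"
proof (cases "t < 0")
  case True
  then have "{n. t < \<bar>decrearr f n\<bar>} = UNIV" "{n. t < \<bar>f n\<bar>} = UNIV" by auto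
  then show ?thesis by (simp add: distf_inf)
next
  case False
  then have t0: "0 \<le> t" by simp
  have Q: "{n. t < \<bar>decrearr f n\<bar>} = {n. enat n < distf f t}"
    using r_char[of f B, OF bnd t0] r_nonneg[of f B, OF bnd] by auto
  show ?thesis
  proof (cases "distf f t")
    case (enat d)
    then have "{n. enat n < distf f t} = {..<d}" by auto
    then show ?thesis using Q enat by (simp add: distf_fin)
  next
    case infinity
    then have "{n. enat n < distf f t} = UNIV" by auto
    then show ?thesis using Q infinity by (simp add: distf_inf)
  qed
qed


lemma ri_unf:
  assumes "ri_space S N"
  shows "(\<lambda>n. 0) \<in> S"
    and "\<forall>x\<in>S. \<forall>y\<in>S. (\<lambda>n. x n + y n) \<in> S"
    and "\<forall>c::real. \<forall>x\<in>S. (\<lambda>n. c * x n) \<in> S"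
    and "\<forall>x\<in>S. N x \<ge> 0"
    and "\<forall>x\<in>S. N x = 0 \<longleftrightarrow> x = (\<lambda>n. 0)"
    and "\<forall>c. \<forall>x\<in>S. N (\<lambda>n. c * x n) = \<bar>c\<bar> * N x"
    and "\<forall>x\<in>S. \<forall>y\<in>S. N (\<lambda>n. x n + y n) \<le> N x + N y"
    and "\<forall>x y. y \<in> S \<and> (\<forall>n. \<bar>x n\<bar> \<le> \<bar>y n\<bar>) \<longrightarrow> x \<in> S \<and> N x \<le> N y"
    and "\<exists>x\<in>S. \<forall>n. x n \<noteq> 0"
    and "\<forall>x y. x \<in> S \<and> equidist x y \<longrightarrow> y \<in> S \<and> N y = N x"
proof -
  note H = assms[unfolded ri_space_def banach_seq_space_def]
  show "(\<lambda>n. 0) \<in> S" using H by (elim conjE) assumption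
  show "\<forall>x\<in>S. \<forall>y\<in>S. (\<lambda>n. x n + y n) \<in> S" using H by (elim conjE) assumption
  show "\<forall>c::real. \<forall>x\<in>S. (\<lambda>n. c * x n) \<in> S" using H by (elim conjE) assumption
  show "\<forall>x\<in>S. N x \<ge> 0" using H by (elim conjE) assumption
  show "\<forall>x\<in>S. N x = 0 \<longleftrightarrow> x = (\<lambda>n. 0)" using H by (elim conjE) assumption
  show "\<forall>c. \<forall>x\<in>S. N (\<lambda>n. c * x n) = \<bar>c\<bar> * N x" using H by (elim conjE) assumption
  show "\<forall>x\<in>S. \<forall>y\<in>S. N (\<lambda>n. x n + y n) \<le> N x + N y" using H by (elim conjE) assumption
  show "\<forall>x y. y \<in> S \<and> (\<forall>n. \<bar>x n\<bar> \<le> \<bar>y n\<bar>) \<longrightarrow> x \<in> S \<and> N x \<le> N y" using H by (elim conjE) assumption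
  show "\<exists>x\<in>S. \<forall>n. x n \<noteq> 0" using H by (elim conjE) assumption
  show "\<forall>x y. x \<in> S \<and> equidist x y \<longrightarrow> y \<in> S \<and> N y = N x" using H by (elim conjE) assumption
qed

lemma ri_ideal: "ri_space S N \<Longrightarrow> y \<in> S \<Longrightarrow> (\<And>n. \<bar>x n\<bar> \<le> \<bar>y n\<bar>) \<Longrightarrow> x \<in> S \<and> N x \<le> N y"
  using ri_unf(8) by blast

lemma ri_equi: "ri_space S N \<Longrightarrow> x \<in> S \<Longrightarrow> equidist x y \<Longrightarrow> y \<in> S \<and> N y = N x"
  using ri_unf(10) by blast

lemma ri_add: "ri_space S N \<Longrightarrow> x \<in> S \<Longrightarrow> y \<in> S \<Longrightarrow> (\<lambda>n. x n + y n) \<in> S"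
  using ri_unf(2) by blast

lemma ri_smult: "ri_space S N \<Longrightarrow> x \<in> S \<Longrightarrow> (\<lambda>n. c * x n) \<in> S"
  using ri_unf(3) by blast

lemma ri_Nsmult: "ri_space S N \<Longrightarrow> x \<in> S \<Longrightarrow> N (\<lambda>n. c * x n) = \<bar>c\<bar> * N x"
  using ri_unf(6) by blast

lemma ri_tri: "ri_space S N \<Longrightarrow> x \<in> S \<Longrightarrow> y \<in> S \<Longrightarrow> N (\<lambda>n. x n + y n) \<le> N x + N y"
  using ri_unf(7) by blast

lemma ri_nonneg: "ri_space S N \<Longrightarrow> x \<in> S \<Longrightarrow> 0 \<le> N x"
  using ri_unf(4) by blast

lemma ri_zero_iff: "ri_space S N \<Longrightarrow> x \<in> S \<Longrightarrow> N x = 0 \<longleftrightarrow> x = (\<lambda>n. 0)"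
  using ri_unf(5) by blast

lemma ri_zero: "ri_space S N \<Longrightarrow> (\<lambda>n. 0) \<in> S"
  using ri_unf(1) by blast

lemma ri_ex: "ri_space S N \<Longrightarrow> \<exists>z\<in>S. \<forall>n. z n \<noteq> 0"
  using ri_unf(9) by blast

lemma ri_diff: "ri_space S N \<Longrightarrow> x \<in> S \<Longrightarrow> y \<in> S \<Longrightarrow> (\<lambda>n. x n - y n) \<in> S"
proof -
  assume ri: "ri_space S N" and x: "x \<in> S" and y: "y \<in> S"
  have "(\<lambda>n. (-1) * y n) \<in> S" using ri_smult[OF ri y] .
  from ri_add[OF ri x this] show ?thesis by simp
qed

lemma ri_abs: "ri_space S N \<Longrightarrow> x \<in> S \<Longrightarrow> (\<lambda>n. \<bar>x n\<bar>) \<in> S \<and> N (\<lambda>n. \<bar>x n\<bar>) = N x"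
proof -
  assume ri: "ri_space S N" and x: "x \<in> S"
  have 1: "(\<lambda>n. \<bar>x n\<bar>) \<in> S \<and> N (\<lambda>n. \<bar>x n\<bar>) \<le> N x" by (rule ri_ideal[OF ri x]) simp
  have 2: "N x \<le> N (\<lambda>n. \<bar>x n\<bar>)" using ri_ideal[OF ri 1[THEN conjunct1], of x] by simp
  show ?thesis using 1 2 by simp
qed

lemma tlz_S: "ri_space S N \<Longrightarrow> x \<in> S \<Longrightarrow> tlz m x \<in> S \<and> N (tlz m x) \<le> N x"
  by (rule ri_ideal) (auto simp: tlz_def)

definition en :: "nat \<Rightarrow> seq" where "en k = (\<lambda>i. if i = k then 1 else 0)"

lemma distf_en: "distf (en k) t = (if t < 0 then \<infinity> else if t < 1 then 1 else 0)"
proof -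
  consider "t < 0" | "0 \<le> t \<and> t < 1" | "1 \<le> t" by linarith
  then show ?thesis
  proof cases
    case 1
    then have "{n. t < \<bar>en k n\<bar>} = UNIV" by (auto simp: en_def)
    then show ?thesis using 1 by (simp add: distf_inf)
  next
    case 2
    then have "{n. t < \<bar>en k n\<bar>} = {k}" by (auto simp: en_def)
    then show ?thesis using 2 by (simp add: distf_fin one_enat_def)
  next
    case 3
    then have "{n. t < \<bar>en k n\<bar>} = {}" by (auto simp: en_def)
    then show ?thesis using 3 by (simp add: distf_fin zero_enat_def)
  qed
qed

lemma en_S:
  assumes ri: "ri_space S N"
  shows "en k \<in> S \<and> N (en k) = N (en 0) \<and> 0 < N (en 0)"
proof -
  obtain z where z: "z \<in> S" "\<And>n. z n \<noteq> 0" using ri_ex[OF ri] by blast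
  have zs: "(\<lambda>i. (1 / \<bar>z 0\<bar>) * z i) \<in> S" using ri_smult[OF ri z(1)] .
  have e0: "en 0 \<in> S"
  proof -
    have "\<bar>en 0 i\<bar> \<le> \<bar>(1 / \<bar>z 0\<bar>) * z i\<bar>" for i
      using z(2)[of 0] by (auto simp: en_def abs_mult)
    then show ?thesis using ri_ideal[OF ri zs] by blast
  qed
  have eq: "equidist (en 0) (en k)" unfolding equidist_def by (simp add: distf_en)
  have ek: "en k \<in> S \<and> N (en k) = N (en 0)" using ri_equi[OF ri e0 eq] .
  have "en 0 \<noteq> (\<lambda>n. 0)" by (auto simp: en_def fun_eq_iff)
  then have "N (en 0) \<noteq> 0" using ri_zero_iff[OF ri e0] by simp
  then have "0 < N (en 0)" using ri_nonneg[OF ri e0] by simp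
  then show ?thesis using ek by simp
qed

lemma ri_bounded:
  assumes ri: "ri_space S N" and f: "f \<in> S"
  shows "\<exists>B. \<forall>n. \<bar>f n\<bar> \<le> B"
proof -
  define c where "c = N (en 0)"
  have c: "0 < c" using en_S[OF ri] unfolding c_def by blast
  have "\<bar>f n\<bar> \<le> N f / c" for n
  proof -
    have ek: "en n \<in> S" "N (en n) = c" using en_S[OF ri, of n] unfolding c_def by auto
    have le: "\<bar>\<bar>f n\<bar> * en n i\<bar> \<le> \<bar>f i\<bar>" for i by (auto simp: en_def)
    have "(\<lambda>i. \<bar>f n\<bar> * en n i) \<in> S \<and> N (\<lambda>i. \<bar>f n\<bar> * en n i) \<le> N f"
      by (rule ri_ideal[OF ri f]) (rule le)
    then have "N (\<lambda>i. \<bar>f n\<bar> * en n i) \<le> N f" by (rule conjunct2)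
    moreover have "N (\<lambda>i. \<bar>f n\<bar> * en n i) = \<bar>f n\<bar> * c" using ri_Nsmult[OF ri ek(1)] ek(2) by simp
    ultimately show ?thesis using c by (simp add: pos_le_divide_eq)
  qed
  then show ?thesis by blast
qed

definition ind :: "nat \<Rightarrow> seq" where "ind m = (\<lambda>i. if i < m then 1 else 0)"

lemma ind_S: "ri_space S N \<Longrightarrow> ind m \<in> S"
proof (induction m)
  case 0
  then show ?case using ri_zero[OF 0] by (simp add: ind_def)
next
  case (Suc m)
  have "ind (Suc m) = (\<lambda>i. ind m i + en m i)" by (auto simp: ind_def en_def fun_eq_iff)
  then show ?case using ri_add[OF Suc(2) Suc(1)[OF Suc(2)] en_S[OF Suc(2), THEN conjunct1]] by simp
qed

lemma finsupp_Xa: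
  assumes ri: "ri_space S N" and x: "x \<in> S" and fs: "\<And>n. m \<le> n \<Longrightarrow> x n = 0"
  shows "x \<in> ord_cont_part S N"
  unfolding ord_cont_part_def
proof (intro CollectI conjI allI impI)
  show "x \<in> S" by (rule x)
  fix xs :: "nat \<Rightarrow> seq"
  assume H: "(\<forall>k n. 0 \<le> xs k n \<and> xs k n \<le> \<bar>x n\<bar>) \<and> (\<forall>n. decseq (\<lambda>k. xs k n)) \<and> (\<forall>n. (\<lambda>k. xs k n) \<longlonglongrightarrow> 0)"
  define s where "s k = (\<Sum>j<m. xs k j)" for k
  have s0: "s \<longlonglongrightarrow> 0"
  proof -
    have "(\<lambda>k. \<Sum>j<m. xs k j) \<longlonglongrightarrow> (\<Sum>j<m. 0)"
      by (rule tendsto_sum) (use H in auto)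
    then show ?thesis unfolding s_def by simp
  qed
  have iS: "ind m \<in> S" by (rule ind_S[OF ri])
  have bnd: "0 \<le> N (xs k) \<and> N (xs k) \<le> \<bar>s k\<bar> * N (ind m)" for k
  proof -
    have le: "\<bar>xs k i\<bar> \<le> \<bar>s k * ind m i\<bar>" for i
    proof (cases "i < m")
      case True
      have "xs k i \<le> s k" unfolding s_def
        by (rule member_le_sum) (use H True in auto)
      then show ?thesis using True H by (auto simp: ind_def)
    next
      case False
      then have "xs k i = 0" using H fs[of i] by (metis abs_zero antisym not_le)
      then show ?thesis by simp
    qed
    have "xs k \<in> S \<and> N (xs k) \<le> N (\<lambda>i. s k * ind m i)"
      by (rule ri_ideal[OF ri ri_smult[OF ri iS]]) (rule le)
    then show ?thesis using ri_Nsmult[OF ri iS] ri_nonneg[OF ri] by auto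
  qed
  have "(\<lambda>k. \<bar>s k\<bar> * N (ind m)) \<longlonglongrightarrow> 0"
    using tendsto_mult_left_zero[OF tendsto_rabs_zero[OF s0]] by simp
  note lim = this
  have e1: "\<forall>\<^sub>F k in sequentially. 0 \<le> N (xs k)" using bnd by simp
  have e2: "\<forall>\<^sub>F k in sequentially. N (xs k) \<le> \<bar>s k\<bar> * N (ind m)" using bnd by simp
  show "(\<lambda>k. N (xs k)) \<longlonglongrightarrow> 0"
    by (rule tendsto_sandwich[OF e1 e2 tendsto_const lim])
qed

lemma Xa_tail:
  assumes ri: "ri_space S N" and g: "g \<in> ord_cont_part S N"
  shows "(\<lambda>m. N (tlz m g)) \<longlonglongrightarrow> 0"
proof -
  have gS: "g \<in> S" and H: "\<And>xs. (\<forall>k n. 0 \<le> xs k n \<and> xs k n \<le> \<bar>g n\<bar>) \<and> (\<forall>n. decseq (\<lambda>k. xs k n)) \<and>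
      (\<forall>n. (\<lambda>k. xs k n) \<longlonglongrightarrow> 0) \<Longrightarrow> (\<lambda>k. N (xs k)) \<longlonglongrightarrow> 0"
    using g unfolding ord_cont_part_def by auto
  define xs where "xs m = (\<lambda>n. \<bar>tlz m g n\<bar>)" for m
  have "(\<lambda>k. N (xs k)) \<longlonglongrightarrow> 0"
  proof (rule H, intro conjI allI)
    fix k n show "0 \<le> xs k n" "xs k n \<le> \<bar>g n\<bar>" by (auto simp: xs_def tlz_def)
  next
    fix n show "decseq (\<lambda>k. xs k n)"
      by (rule decseq_SucI) (auto simp: xs_def tlz_def)
  next
    fix n show "(\<lambda>k. xs k n) \<longlonglongrightarrow> 0"
    proof (rule tendsto_eventually)
      show "\<forall>\<^sub>F k in sequentially. xs k n = 0"
        unfolding eventually_sequentially by (rule exI[of _ "Suc n"]) (auto simp: xs_def tlz_def)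
    qed
  qed
  moreover have "N (xs k) = N (tlz k g)" for k
    unfolding xs_def using ri_abs[OF ri tlz_S[OF ri gS, THEN conjunct1]] by simp
  ultimately show ?thesis by simp
qed

lemma dist_tail:
  assumes ri: "ri_space S N" and h: "h \<in> S"
  shows "dist_Xa S N h = (INF m. N (tlz m h))"
proof -
  let ?X = "ord_cont_part S N"
  have XS: "?X \<subseteq> S" unfolding ord_cont_part_def by auto
  have bdd1: "bdd_below ((\<lambda>g. N (\<lambda>i. h i - g i)) ` ?X)"
    by (rule bdd_belowI2[of _ 0]) (use XS ri_nonneg[OF ri] ri_diff[OF ri h] in blast)
  have bdd2: "bdd_below (range (\<lambda>m. N (tlz m h)))"
    by (rule bdd_belowI2[of _ 0]) (use ri_nonneg[OF ri] tlz_S[OF ri h] in blast)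
  have Xne: "(\<lambda>n. 0) \<in> ?X" by (rule finsupp_Xa[OF ri ri_zero[OF ri], of 0]) simp
  show ?thesis
  proof (rule antisym)
    show "dist_Xa S N h \<le> (INF m. N (tlz m h))" unfolding dist_Xa_def
    proof (rule cINF_greatest)
      show "UNIV \<noteq> {}" by simp
      fix m
      have hm: "(\<lambda>n. if n < m then h n else 0) \<in> ?X"
      proof (rule finsupp_Xa[OF ri _, of _ m])
        show "(\<lambda>n. if n < m then h n else 0) \<in> S" by (rule ri_ideal[OF ri h, THEN conjunct1]) auto
      qed auto
      have "(INF g\<in>?X. N (\<lambda>i. h i - g i)) \<le> N (\<lambda>i. h i - (if i < m then h i else 0))"
        using cINF_lower[OF bdd1 hm] by simp
      also have "(\<lambda>i. h i - (if i < m then h i else 0)) = tlz m h" by (auto simp: tlz_def fun_eq_iff)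
      finally show "(INF g\<in>?X. N (\<lambda>i. h i - g i)) \<le> N (tlz m h)" .
    qed
    show "(INF m. N (tlz m h)) \<le> dist_Xa S N h" unfolding dist_Xa_def
    proof (rule cINF_greatest)
      show "?X \<noteq> {}" using Xne by auto
      fix g assume g: "g \<in> ?X"
      have gS: "g \<in> S" using g XS by auto
      let ?D = "INF m. N (tlz m h)"
      have dS: "(\<lambda>i. h i - g i) \<in> S" by (rule ri_diff[OF ri h gS])
      have le: "?D - N (\<lambda>i. h i - g i) \<le> N (tlz m g)" for m
      proof -
        have "?D \<le> N (tlz m h)" by (rule cINF_lower[OF bdd2]) simp
        also have "tlz m h = (\<lambda>i. tlz m (\<lambda>i. h i - g i) i + tlz m g i)" by (auto simp: tlz_def fun_eq_iff)
        also have "N \<dots> \<le> N (tlz m (\<lambda>i. h i - g i)) + N (tlz m g)"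
          by (rule ri_tri[OF ri tlz_S[OF ri dS, THEN conjunct1] tlz_S[OF ri gS, THEN conjunct1]])
        also have "\<dots> \<le> N (\<lambda>i. h i - g i) + N (tlz m g)" using tlz_S[OF ri dS] by simp
        finally show ?thesis by simp
      qed
      have "?D - N (\<lambda>i. h i - g i) \<le> 0"
        by (rule LIMSEQ_le_const[OF Xa_tail[OF ri g]]) (use le in blast)
      then show "?D \<le> N (\<lambda>i. h i - g i)" by simp
    qed
  qed
qed


lemma r_mono:
  assumes bnd: "\<And>n. \<bar>f n\<bar> \<le> B" and kk: "k \<le> k'"
  shows "decrearr f k' \<le> decrearr f k"
proof (rule ccontr)
  assume "\<not> decrearr f k' \<le> decrearr f k"
  then have lt: "decrearr f k < decrearr f k'" by simp
  have t0: "0 \<le> decrearr f k" by (rule r_nonneg[of f B, OF bnd])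
  have "enat k' < distf f (decrearr f k)" using r_char[of f B, OF bnd t0] lt by blast
  then have "enat k < distf f (decrearr f k)" using kk
    by (meson enat_ord_simps(1) order_le_less_trans)
  then show False using r_char[of f B _ k, OF bnd t0] by simp
qed

lemma r_bound:
  assumes bnd: "\<And>n. \<bar>f n\<bar> \<le> B"
  shows "\<bar>decrearr f k\<bar> \<le> B"
proof -
  have B0: "0 \<le> B" using bnd[of 0] by linarith
  have "{n. B < \<bar>f n\<bar>} = {}" using bnd by (auto simp: not_less)
  then have d0: "distf f B = 0" by (simp add: distf_fin zero_enat_def)
  have "\<not> B < decrearr f k" using r_char[of f B B k, OF bnd B0] d0 by simp
  then show ?thesis using r_nonneg[of f B, OF bnd, of k] by simp
qed

lemma compare:
  assumes ri: "ri_space S N" and h: "h \<in> S" and gb: "\<And>n. \<bar>g n\<bar> \<le> Bg"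
    and dle: "\<And>t. 0 \<le> t \<Longrightarrow> distf g t \<le> distf h t"
  shows "g \<in> S \<and> N g \<le> N h"
proof -
  obtain Bh where hb: "\<And>n. \<bar>h n\<bar> \<le> Bh" using ri_bounded[OF ri h] by blast
  have le: "decrearr g k \<le> decrearr h k" for k
  proof (rule ccontr)
    assume "\<not> decrearr g k \<le> decrearr h k"
    then have lt: "decrearr h k < decrearr g k" by simp
    have t0: "0 \<le> decrearr h k" by (rule r_nonneg[of h Bh, OF hb])
    have "enat k < distf g (decrearr h k)" using r_char[of g Bg, OF gb t0] lt by blast
    also have "\<dots> \<le> distf h (decrearr h k)" by (rule dle[OF t0])
    finally show False using r_char[of h Bh _ k, OF hb t0] by simp
  qed
  have eh: "equidist h (decrearr h)" unfolding equidist_def using r_distf[of h Bh, OF hb] by simp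
  have hs: "decrearr h \<in> S \<and> N (decrearr h) = N h" by (rule ri_equi[OF ri h eh])
  have gs: "decrearr g \<in> S \<and> N (decrearr g) \<le> N (decrearr h)"
  proof (rule ri_ideal[OF ri hs[THEN conjunct1]])
    fix n show "\<bar>decrearr g n\<bar> \<le> \<bar>decrearr h n\<bar>"
      using le[of n] r_nonneg[of g Bg, OF gb, of n] r_nonneg[of h Bh, OF hb, of n] by simp
  qed
  have eg: "equidist (decrearr g) g" unfolding equidist_def using r_distf[of g Bg, OF gb] by simp
  have "g \<in> S \<and> N g = N (decrearr g)" by (rule ri_equi[OF ri gs[THEN conjunct1] eg])
  then show ?thesis using gs hs by simp
qed

theorem theorem3p6:
  fixes S :: "(nat \<Rightarrow> real) set" and N :: "(nat \<Rightarrow> real) \<Rightarrow> real" and f :: "nat \<Rightarrow> real"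
  assumes "ri_space S N" and "fatou S N" and "f \<in> S"
  shows "dist_Xa S N (decrearr f) = dist_Xa S N f"
proof -
  note ri = assms(1)
  note fS = assms(3)
  obtain B where bnd: "\<And>n. \<bar>f n\<bar> \<le> B" using ri_bounded[OF ri fS] by blast
  have B0: "0 \<le> B" using bnd[of 0] by linarith
  define fs where "fs = decrearr f"
  have fsb: "\<bar>fs k\<bar> \<le> B" for k unfolding fs_def by (rule r_bound[of f B, OF bnd])
  have fsnn: "0 \<le> fs k" for k unfolding fs_def by (rule r_nonneg[of f B, OF bnd])
  have fch: "0 \<le> t \<Longrightarrow> t < fs k \<longleftrightarrow> enat k < distf f t" for t k
    unfolding fs_def by (rule r_char[of f B, OF bnd])
  have ef: "equidist f fs" unfolding equidist_def fs_def using r_distf[of f B, OF bnd] by simp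
  have fsS: "fs \<in> S" using ri_equi[OF ri fS ef] by blast
  have set_tl: "{n. t < \<bar>tlz m x n\<bar>} = {n. t < \<bar>x n\<bar>} - {..<m}" if "0 \<le> t" for t m x
    using that by (auto simp: tlz_def)
  have set_fs: "{n. t < \<bar>tlz m fs n\<bar>} = {n. m \<le> n \<and> enat n < distf f t}" if t0: "0 \<le> t" for t m
    using t0 fch[OF t0] fsnn by (auto simp: tlz_def)
  have tlb: "\<bar>tlz m x n\<bar> \<le> B" if "\<And>n. \<bar>x n\<bar> \<le> B" for x m n
    using that[of n] B0 by (auto simp: tlz_def)
  have infty_fs: "distf (tlz m fs) t = \<infinity>" if t0: "0 \<le> t" and all: "\<And>n. m \<le> n \<Longrightarrow> enat n < distf f t" for t m
  proof -
    have "{n. t < \<bar>tlz m fs n\<bar>} = {m..}" using set_fs[OF t0] all by auto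
    then show ?thesis using infinite_Ici[of m] by (simp add: distf_inf)
  qed
  have dirB: "N (tlz m fs) \<le> N (tlz m f)" for m
  proof -
    have "tlz m fs \<in> S \<and> N (tlz m fs) \<le> N (tlz m f)"
    proof (rule compare[OF ri tlz_S[OF ri fS, THEN conjunct1]])
      show "\<bar>tlz m fs n\<bar> \<le> B" for n by (rule tlb[OF fsb])
      fix t :: real assume t0: "0 \<le> t"
      define P where "P = {n. t < \<bar>f n\<bar>}"
      have hset: "{n. t < \<bar>tlz m f n\<bar>} = P - {..<m}" unfolding P_def by (rule set_tl[OF t0])
      show "distf (tlz m fs) t \<le> distf (tlz m f) t"
      proof (cases "finite P")
        case True
        then have dP: "distf f t = enat (card P)" unfolding P_def by (simp add: distf_fin)
        have "{n. t < \<bar>tlz m fs n\<bar>} = {m..<card P}" using set_fs[OF t0] dP by auto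
        then have g: "distf (tlz m fs) t = enat (card P - m)" by (simp add: distf_fin)
        have "distf (tlz m f) t = enat (card (P - {..<m}))" using hset True by (simp add: distf_fin)
        moreover have "card P - m \<le> card (P - {..<m})" using diff_card_le_card_Diff[of "{..<m}" P] by simp
        ultimately show ?thesis using g by simp
      next
        case False
        then have "infinite (P - {..<m})" by (simp add: Diff_infinite_finite)
        then have "distf (tlz m f) t = \<infinity>" using hset by (simp add: distf_inf)
        then show ?thesis by simp
      qed
    qed
    then show ?thesis by blast
  qed
  have dirA: "\<exists>m'. N (tlz m' f) \<le> N (tlz m fs)" for m
  proof -
    have key: "\<exists>u. 0 \<le> u \<and> finite {n. u < \<bar>f n\<bar>} \<and>
       (\<forall>t. 0 \<le> t \<and> t < u \<longrightarrow> (\<forall>n. m \<le> n \<longrightarrow> enat n < distf f t) \<or> m \<le> card {n. u < \<bar>f n\<bar>})"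
    proof (cases "\<exists>k0. fs k0 < fs m")
      case True
      then obtain k0 where k0: "fs k0 < fs m" by blast
      define u where "u = fs k0"
      have u0: "0 \<le> u" unfolding u_def by (rule fsnn)
      have fin: "finite {n. u < \<bar>f n\<bar>}"
      proof (rule ccontr)
        assume "infinite {n. u < \<bar>f n\<bar>}"
        then have "distf f u = \<infinity>" by (simp add: distf_inf)
        then have "u < fs k0" using fch[OF u0, of k0] by simp
        then show False unfolding u_def by simp
      qed
      have "enat m < distf f u" using fch[OF u0, of m] k0 unfolding u_def by simp
      then have "m \<le> card {n. u < \<bar>f n\<bar>}" using fin by (simp add: distf_fin)
      then show ?thesis using u0 fin by blast
    next
      case False
      then have mk: "\<And>k. fs m \<le> fs k" by (simp add: not_less)
      define u where "u = fs m"
      have u0: "0 \<le> u" unfolding u_def by (rule fsnn)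
      have fin: "finite {n. u < \<bar>f n\<bar>}"
      proof (rule ccontr)
        assume "infinite {n. u < \<bar>f n\<bar>}"
        then have "distf f u = \<infinity>" by (simp add: distf_inf)
        then have "u < fs m" using fch[OF u0, of m] by simp
        then show False unfolding u_def by simp
      qed
      have "\<forall>n. m \<le> n \<longrightarrow> enat n < distf f t" if "0 \<le> t" "t < u" for t
      proof (intro allI impI)
        fix n assume "m \<le> n"
        have "t < fs n" using that mk[of n] unfolding u_def by simp
        then show "enat n < distf f t" using fch[OF that(1)] by simp
      qed
      then show ?thesis using u0 fin by blast
    qed
    then obtain u where u0: "0 \<le> u" and fin: "finite {n. u < \<bar>f n\<bar>}"
      and alt: "\<And>t. 0 \<le> t \<Longrightarrow> t < u \<Longrightarrow> (\<forall>n. m \<le> n \<longrightarrow> enat n < distf f t) \<or> m \<le> card {n. u < \<bar>f n\<bar>}"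
      by blast
    define E where "E = {n. u < \<bar>f n\<bar>}"
    obtain m' where m': "E \<subseteq> {..<m'}" using fin unfolding E_def finite_nat_iff_bounded by blast
    have "tlz m' f \<in> S \<and> N (tlz m' f) \<le> N (tlz m fs)"
    proof (rule compare[OF ri tlz_S[OF ri fsS, THEN conjunct1]])
      show "\<bar>tlz m' f n\<bar> \<le> B" for n by (rule tlb[OF bnd])
      fix t :: real assume t0: "0 \<le> t"
      define P where "P = {n. t < \<bar>f n\<bar>}"
      have gset: "{n. t < \<bar>tlz m' f n\<bar>} = P - {..<m'}" unfolding P_def by (rule set_tl[OF t0])
      show "distf (tlz m' f) t \<le> distf (tlz m fs) t"
      proof (cases "u \<le> t")
        case True
        have "P - {..<m'} = {}"
        proof -
          have "n \<in> E" if "n \<in> P" for n using that True unfolding P_def E_def by auto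
          then show ?thesis using m' by auto
        qed
        then have e: "{n. t < \<bar>tlz m' f n\<bar>} = {}" using gset by simp
        have "distf (tlz m' f) t = 0" by (simp only: distf_def e) (simp add: zero_enat_def)
        then show ?thesis by simp
      next
        case False
        then have tu: "t < u" by simp
        show ?thesis
        proof (cases "\<forall>n. m \<le> n \<longrightarrow> enat n < distf f t")
          case True
          then have "distf (tlz m fs) t = \<infinity>" using infty_fs[OF t0] by blast
          then show ?thesis by simp
        next
          case False
          then have mE: "m \<le> card E" using alt[OF t0 tu] unfolding E_def by blast
          have EP: "E \<subseteq> P" using tu unfolding E_def P_def by auto
          show ?thesis
          proof (cases "finite P")
            case fP: True
            then have dP: "distf f t = enat (card P)" unfolding P_def by (simp add: distf_fin)
            have "{n. t < \<bar>tlz m fs n\<bar>} = {m..<card P}" using set_fs[OF t0] dP by auto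
            then have h: "distf (tlz m fs) t = enat (card P - m)" by (simp add: distf_fin)
            have g: "distf (tlz m' f) t = enat (card (P - {..<m'}))" using gset fP by (simp add: distf_fin)
            have c1: "card (P - {..<m'}) = card P - card (P \<inter> {..<m'})"
              by (rule card_Diff_subset_Int) simp
            have "card E \<le> card (P \<inter> {..<m'})" using EP m' by (intro card_mono) auto
            then have "card (P - {..<m'}) \<le> card P - m" using c1 mE by linarith
            then show ?thesis using g h by simp
          next
            case False
            then have "distf f t = \<infinity>" unfolding P_def by (simp add: distf_inf)
            then have "distf (tlz m fs) t = \<infinity>" using infty_fs[OF t0] by simp
            then show ?thesis by simp
          qed
        qed
      qed
    qed
    then show ?thesis by blast
  qed
  have bddf: "bdd_below (range (\<lambda>m. N (tlz m f)))"
    by (rule bdd_belowI2[of _ 0]) (use ri_nonneg[OF ri] tlz_S[OF ri fS] in blast)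
  have bddfs: "bdd_below (range (\<lambda>m. N (tlz m fs)))"
    by (rule bdd_belowI2[of _ 0]) (use ri_nonneg[OF ri] tlz_S[OF ri fsS] in blast)
  have "(INF m. N (tlz m fs)) = (INF m. N (tlz m f))"
  proof (rule antisym)
    show "(INF m. N (tlz m fs)) \<le> (INF m. N (tlz m f))"
      by (rule cINF_mono[OF _ bddfs]) (use dirB in auto)
    show "(INF m. N (tlz m f)) \<le> (INF m. N (tlz m fs))"
      by (rule cINF_mono[OF _ bddf]) (use dirA in auto)
  qed
  then show ?thesis
    using dist_tail[OF ri fS] dist_tail[OF ri fsS] unfolding fs_def by simp
qed

end
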